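(* Let $u_0 \ge 1$ and $r \ge 1$ be integers with $\gcd(u_0, r) = 1$, let $u_k := u_0 + kr$ for $k \ge 0$, and for an integer $n \ge 0$ let $L_n := \operatorname{lcm}\{u_0, u_1, \ldots, u_n\}$. Let $a \ge 2$ be any given integer. Then for any integers $\alpha \ge a$, $r \ge a$ and $n \ge 2\alpha r$, we have $$L_n \ge u_0\, r^{\alpha + a - 2}\,(r+1)^n.$$
   Context: The arithmetic progression is $u_k = u_0 + kr$ with $u_0, r$ positive coprime integers; $L_n$ is the least common multiple of its first $n+1$ terms $u_0,\dots,u_n$. *)

theory Defs
  imports Main
begin

definition ap_term :: "nat \<Rightarrow> nat \<Rightarrow> nat \<Rightarrow> nat" where
  "ap_term u0 r k = u0 + k * r"

definition ap_lcm :: "nat \<Rightarrow> nat \<Rightarrow> nat \<Rightarrow> nat" where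
  "ap_lcm u0 r n = Lcm ((ap_term u0 r) ` {0..n})"

end

theory Submission
  imports Defs Complex_Main
begin

definition pf :: "real \<Rightarrow> real \<Rightarrow> nat \<Rightarrow> real" where
  "pf r x m = (\<Sum>i\<le>m. (-1)^i * real (m choose i) / (x + real i * r))"

lemma pf_ext: "pf r x m = (\<Sum>i\<le>Suc m. (-1)^i * real (m choose i) / (x + real i * r))"
  unfolding pf_def by simp

lemma pf_Suc: "pf r x (Suc m) = pf r x m - pf r (x + r) m"
proof -
  have "pf r x (Suc m) = 1/x + (\<Sum>j\<le>m. (-1)^(Suc j) * real (Suc m choose Suc j) / (x + real (Suc j) * r))"
    unfolding pf_def by (subst sum.atMost_Suc_shift) simp
  also have "\<dots> = 1/x + (\<Sum>j\<le>m. (-1)^(Suc j) * real (m choose Suc j) / (x + real (Suc j) * r))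
       + (\<Sum>j\<le>m. (-1)^(Suc j) * real (m choose j) / (x + real (Suc j) * r))"
    by (simp add: sum.distrib[symmetric] add_divide_distrib ring_distribs) (auto intro!: sum.cong simp: diff_divide_distrib)
  also have "1/x + (\<Sum>j\<le>m. (-1)^(Suc j) * real (m choose Suc j) / (x + real (Suc j) * r)) = pf r x m"
    unfolding pf_ext by (subst sum.atMost_Suc_shift) simp
  also have "(\<Sum>j\<le>m. (-1)^(Suc j) * real (m choose j) / (x + real (Suc j) * r)) = - pf r (x+r) m"
    unfolding pf_def by (simp add: sum_negf[symmetric] algebra_simps)
  finally show ?thesis by simp
qed

lemma pf_closed:
  assumes "x > 0" "r \<ge> 0"
  shows "pf r x m = fact m * r^m / (\<Prod>i\<le>m. (x + real i * r))"
  using assms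
proof (induction m arbitrary: x)
  case 0 then show ?case by (simp add: pf_def)
next
  case (Suc m)
  have pos: "\<And>y i. y > 0 \<Longrightarrow> y + real i * r > 0" using Suc.prems
    by (simp add: add_pos_nonneg)
  have xr: "x + r > 0" using Suc.prems by simp
  have e1: "(\<Prod>i\<le>Suc m. (x + real i * r)) = (\<Prod>i\<le>m. (x + real i * r)) * (x + real (Suc m) * r)"
    by simp
  have e2: "(\<Prod>i\<le>Suc m. (x + real i * r)) = x * (\<Prod>i\<le>m. (x + r + real i * r))"
    by (subst prod.atMost_Suc_shift) (simp add: algebra_simps)
  define P where "P = (\<Prod>i\<le>Suc m. (x + real i * r))"
  have Ppos: "P > 0" unfolding P_def using pos Suc.prems by (intro prod_pos) auto
  have A: "(\<Prod>i\<le>m. (x + real i * r)) = P / (x + real (Suc m) * r)"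
    using e1 pos[OF Suc.prems(1), of "Suc m"] unfolding P_def by simp
  have B: "(\<Prod>i\<le>m. (x + r + real i * r)) = P / x"
    using e2 Suc.prems unfolding P_def by simp
  have "pf r x (Suc m) = fact m * r^m / (P / (x + real (Suc m) * r)) - fact m * r^m / (P / x)"
    using pf_Suc Suc.IH[OF Suc.prems] Suc.IH[OF xr Suc.prems(2)] A B by simp
  also have "\<dots> = fact m * r^m * ((x + real (Suc m) * r) - x) / P"
    using Ppos Suc.prems pos[OF Suc.prems(1), of "Suc m"] by (simp add: field_simps)
  also have "\<dots> = fact (Suc m) * r^(Suc m) / P" by (simp add: algebra_simps)
  finally show ?case unfolding P_def .
qed

lemma coprime_term: "coprime u0 r \<Longrightarrow> coprime (u0 + j * r) (r::nat)"
proof (induction j)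
  case 0 then show ?case by simp
next
  case (Suc j)
  have "u0 + Suc j * r = (u0 + j*r) + r" by simp
  then show ?case using Suc by (simp only: coprime_iff_gcd_eq_1 gcd_add1)
qed

lemma rpow_fact_aux: "r \<ge> 1 \<Longrightarrow> r^q * fact q dvd (fact (q*r) :: nat)"
proof (induction q)
  case 0 then show ?case by simp
next
  case (Suc q)
  have f: "fact (q*r + r) = fact (q*r + r - 1) * (q*r + r)"
    using Suc.prems by (metis add_gr_0 fact_Suc less_numeral_extra(1) mult.commute not_one_le_zero
        Suc_pred' order_less_le_trans le0 of_nat_id)
  have "fact (q*r) dvd (fact (q*r + r - 1) :: nat)"
    using Suc.prems by (intro fact_dvd) simp
  then have "r^q * fact q * ((Suc q) * r) dvd fact (q*r + r - 1) * (q*r + r)"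
    using Suc.IH[OF Suc.prems] by (metis dvd_trans mult_dvd_mono dvd_refl mult.commute mult_Suc add.commute)
  moreover have "r^(Suc q) * fact (Suc q) = r^q * fact q * ((Suc q) * r)"
    by (simp add: algebra_simps)
  ultimately show ?case using f by (simp add: algebra_simps)
qed

lemma rpow_fact: "r \<ge> 1 \<Longrightarrow> r^(m div r) * fact (m div r) dvd (fact m :: nat)"
  by (metis rpow_fact_aux dvd_trans fact_dvd div_times_less_eq_dividend mult.commute)

definition e2 :: "nat \<Rightarrow> nat \<Rightarrow> nat" where
  "e2 r m = m div r + (m div r) div r"

lemma rpow_e2: "r \<ge> 1 \<Longrightarrow> r^(e2 r m) dvd (fact m :: nat)"
proof -
  assume r: "r \<ge> 1"
  let ?q = "m div r"
  have "r^(?q div r) dvd (fact ?q :: nat)" using rpow_fact[OF r, of ?q] dvd_mult_left by blast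
  then have "r^?q * r^(?q div r) dvd r^?q * (fact ?q :: nat)" by simp
  then show ?thesis unfolding e2_def power_add using rpow_fact[OF r, of m] dvd_trans by blast
qed

lemma lcm_pos: "u0 \<ge> 1 \<Longrightarrow> ap_lcm u0 r n > 0"
  unfolding ap_lcm_def ap_term_def by (subst neq0_conv[symmetric]) (auto simp: Lcm_0_iff_nat)

lemma term_dvd: "j \<le> n \<Longrightarrow> u0 + j * r dvd ap_lcm u0 r n"
  unfolding ap_lcm_def by (rule dvd_Lcm) (auto simp: ap_term_def)

lemma dvd_main:
  assumes u0: "u0 \<ge> 1" and kmn: "k + m \<le> n"
  shows "(\<Prod>i\<le>m. u0 + (k+i)*r) dvd ap_lcm u0 r n * fact m * r^m"
proof -
  define L where "L = ap_lcm u0 r n"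
  define x where "x = real (u0 + k*r)"
  have x0: "x > 0" using u0 unfolding x_def by (simp add: add_pos_nonneg)
  have tr: "\<And>i. x + real i * real r = real (u0 + (k+i)*r)" unfolding x_def by (simp add: algebra_simps)
  have dv: "\<And>i. i \<le> m \<Longrightarrow> u0 + (k+i)*r dvd L" unfolding L_def using kmn by (intro term_dvd) simp
  define P where "P = (\<Prod>i\<le>m. u0 + (k+i)*r)"
  have "P > 0" unfolding P_def using u0 by (intro prod_pos) simp
  then have Pp: "real P > 0" by simp
  have Pr: "real P = (\<Prod>i\<le>m. (x + real i * real r))" unfolding P_def by (simp add: tr)
  define N :: int where "N = (\<Sum>i\<le>m. (-1)^i * int (m choose i) * int (L div (u0 + (k+i)*r)))"
  have "real_of_int N = (\<Sum>i\<le>m. (-1)^i * real (m choose i) * (real L / real (u0 + (k+i)*r)))"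
    unfolding N_def by (auto intro!: sum.cong simp: real_of_nat_div dv)
  also have "\<dots> = real L * pf (real r) x m"
    unfolding pf_def by (simp add: sum_distrib_left tr) (auto intro!: sum.cong simp: algebra_simps)
  also have "\<dots> = real L * (fact m * real r^m / real P)"
    using pf_closed[OF x0, of "real r" m] Pr by simp
  finally have "real_of_int N * real P = real L * fact m * real r^m" using Pp by (simp add: field_simps)
  then have "N * int P = int (L * fact m * r^m)"
    by (metis (mono_tags, lifting) of_int_eq_iff of_int_mult of_int_of_nat_eq of_nat_fact
        of_nat_mult of_nat_power)
  then have "int P dvd int (L * fact m * r^m)" by (metis dvd_triv_right)
  then have "P dvd L * fact m * r^m" by (simp only: int_dvd_int_iff)
  then show ?thesis unfolding P_def L_def .
qed

lemma lcm_bound: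
  assumes u0: "u0 \<ge> 1" and r: "r \<ge> 1" and cop: "coprime u0 r" and kmn: "k + m \<le> n"
  shows "(\<Prod>i\<le>m. u0 + (k+i)*r) * r^(e2 r m) \<le> ap_lcm u0 r n * fact m"
proof -
  define P where "P = (\<Prod>i\<le>m. u0 + (k+i)*r)"
  define L where "L = ap_lcm u0 r n"
  have d: "P dvd L * fact m * r^m" using dvd_main[OF u0 kmn] unfolding P_def L_def .
  have cP: "coprime P r" unfolding P_def
    by (rule prod_coprime_left) (metis coprime_term[OF cop] add_mult_distrib)
  have "P dvd L * fact m" using d cP by (simp add: coprime_dvd_mult_left_iff)
  moreover obtain c where c: "fact m = r^(e2 r m) * c" using rpow_e2[OF r, of m] by blast
  ultimately have "P dvd (L * c) * r^(e2 r m)" by (simp add: algebra_simps)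
  then have "P dvd L * c" using cP by (simp add: coprime_dvd_mult_left_iff)
  moreover have "L * c > 0" using lcm_pos[OF u0] c unfolding L_def
    by (metis fact_gt_zero mult_is_0 neq0_conv)
  ultimately have "P \<le> L * c" by (simp add: dvd_imp_le)
  then have "P * r^(e2 r m) \<le> L * c * r^(e2 r m)" by simp
  then show ?thesis using c unfolding P_def L_def by (simp add: algebra_simps)
qed

lemma amgm:
  fixes x Y :: real and r :: nat
  assumes x: "x > 0" and Y: "Y > 0"
  shows "(real r+1)^(r+1) * x \<le> (x + Y * r) * (r + x/Y)^r"
proof -
  define z where "z = (x/Y - 1) / (r+1)"
  have "0 \<le> x/Y" using x Y by simp
  then have "-1 * (real r + 1) \<le> x/Y - 1" by simp
  then have z: "-1 \<le> z" unfolding z_def by (simp add: le_divide_eq)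
  have B: "1 + real (r+1) * z \<le> (1 + z)^(r+1)" by (rule Bernoulli_inequality[OF z])
  have "real (r+1) * z = x/Y - 1" unfolding z_def by (simp del: of_nat_Suc)
  then have B1: "1 + real (r+1) * z = x / Y" by simp
  have "(r+1) * z = x/Y - 1" unfolding z_def by simp
  then have "(r+1) * (1 + z) = r + x/Y" by (simp add: algebra_simps)
  then have B2: "1 + z = (r + x/Y) / (r+1)" by (simp add: field_simps)
  have C: "x / Y \<le> ((r + x/Y)/(r+1))^(r+1)" by (metis B B1 B2)
  have D: "(real r+1)^(r+1) * ((r + x/Y)/(r+1))^(r+1) = (r+x/Y)^(r+1)"
    by (simp only: power_divide) (simp del: power_Suc add: add.commute)
  have "(real r+1)^(r+1) * (x/Y) \<le> (real r+1)^(r+1) * ((r + x/Y)/(r+1))^(r+1)"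
    by (rule mult_left_mono[OF C]) simp
  also note D
  finally have "(real r+1)^(r+1) * (x / Y) \<le> (r + x/Y)^(r+1)" .
  then have A1: "(real r+1)^(r+1) * (x / Y) * Y \<le> (r + x/Y)^(r+1) * Y" using Y by (intro mult_right_mono) auto
  have A2: "(real r+1)^(r+1) * x = (real r+1)^(r+1) * (x / Y) * Y" using Y by simp
  have h: "(r + x/Y)*Y = x + Y*r" using Y by (simp add: field_simps)
  have "(r + x/Y)^(r+1) * Y = ((r + x/Y)*Y) * (r + x/Y)^r" by (simp add: algebra_simps)
  then have A3: "(r + x/Y)^(r+1) * Y = (x + Y * r) * (r + x/Y)^r" by (simp only: h)
  show ?thesis using A1 unfolding A2[symmetric] A3 .
qed

lemma core:
  fixes x :: real and r m :: nat
  assumes x: "x > 0"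
  shows "(real r+1)^(r+1) * x * (\<Prod>j<r. real (m+1+j)) \<le> (\<Prod>j<r+1. x + real (m+1+j) * r)"
proof -
  define Y where "Y = real (m+1+r)"
  have Y: "Y > 0" unfolding Y_def by simp
  have "(\<Prod>j<r. real (m+1+j) * (r + x/Y)) \<le> (\<Prod>j<r. x + real (m+1+j) * r)"
  proof (rule prod_mono)
    fix j assume j: "j \<in> {..<r}"
    have "real (m+1+j) \<le> Y" using j unfolding Y_def by simp
    then have "real (m+1+j) * x \<le> Y * x" using x by (intro mult_right_mono) auto
    then have "real (m+1+j) * x / Y \<le> Y * x / Y" using Y by (intro divide_right_mono) auto
    then have "real (m+1+j) * (x / Y) \<le> x" using Y by simp
    then show "0 \<le> real (m+1+j) * (r + x/Y) \<and> real (m+1+j) * (r + x/Y) \<le> x + real (m+1+j) * r"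
      using x Y by (simp add: algebra_simps)
  qed
  then have h: "(\<Prod>j<r. real (m+1+j)) * (r + x/Y)^r \<le> (\<Prod>j<r. x + real (m+1+j) * r)"
    by (simp add: prod.distrib)
  have "(real r+1)^(r+1) * x * (\<Prod>j<r. real (m+1+j)) \<le> (x + Y * r) * (r + x/Y)^r * (\<Prod>j<r. real (m+1+j))"
    using amgm[OF x Y, of r] by (intro mult_right_mono) (auto intro: prod_nonneg)
  also have "\<dots> = (x + Y * r) * ((\<Prod>j<r. real (m+1+j)) * (r + x/Y)^r)" by simp
  also have "\<dots> \<le> (x + Y * r) * (\<Prod>j<r. x + real (m+1+j) * r)"
    using h x Y by (intro mult_left_mono) auto
  also have "\<dots> = (\<Prod>j<r+1. x + real (m+1+j) * r)" unfolding Y_def by (simp add: algebra_simps)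
  finally show ?thesis .
qed

definition AA :: "nat \<Rightarrow> nat \<Rightarrow> nat \<Rightarrow> nat \<Rightarrow> real" where
  "AA u0 r k m = (\<Prod>i\<le>m. real (u0 + (k+i)*r)) / fact m"

lemma prod_lessThan_add: "(\<Prod>i<a+b. g i) = (\<Prod>i<a. g i) * (\<Prod>i<b. g (a+i))"
  for g :: "nat \<Rightarrow> real"
  by (induction b) (simp_all add: algebra_simps)

lemma fact_add_prod: "(fact (m+r) :: real) = fact m * (\<Prod>j<r. real (m+1+j))"
  by (induction r) (simp_all add: algebra_simps)

lemma AA_step:
  assumes u0: "u0 \<ge> 1"
  shows "(real r+1)^(r+1) * AA u0 r k m \<le> AA u0 r (k+1) (m+r)"
proof -
  define x where "x = real (u0 + k*r)"
  have x: "x > 0" using u0 unfolding x_def by (simp add: add_pos_nonneg)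
  define Q where "Q = (\<Prod>i<m. real (u0 + (k+1+i)*r))"
  have Q: "Q \<ge> 0" unfolding Q_def by (intro prod_nonneg) auto
  have e1: "(\<Prod>i\<le>m. real (u0 + (k+i)*r)) = x * Q"
    unfolding x_def Q_def lessThan_Suc_atMost[symmetric] prod.lessThan_Suc_shift by simp
  have "(\<Prod>i\<le>m+r. real (u0 + (k+1+i)*r)) = (\<Prod>i<m+(r+1). real (u0 + (k+1+i)*r))"
    by (simp add: lessThan_Suc_atMost[symmetric])
  also have "\<dots> = Q * (\<Prod>j<r+1. real (u0 + (k+1+(m+j))*r))"
    unfolding Q_def by (rule prod_lessThan_add)
  also have "(\<Prod>j<r+1. real (u0 + (k+1+(m+j))*r)) = (\<Prod>j<r+1. x + real (m+1+j) * r)"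
    unfolding x_def by (intro prod.cong) (auto simp: algebra_simps)
  finally have e2: "(\<Prod>i\<le>m+r. real (u0 + (k+(1+i))*r)) = Q * (\<Prod>j<r+1. x + real (m+1+j) * r)"
    by (simp add: add.assoc)
  define D where "D = (\<Prod>j<r. real (m+1+j))"
  have D: "D > 0" unfolding D_def by (intro prod_pos) auto
  have c: "(real r+1)^(r+1) * x * D \<le> (\<Prod>j<r+1. x + real (m+1+j) * r)"
    using core[OF x] unfolding D_def .
  have "(real r+1)^(r+1) * AA u0 r k m = Q * ((real r+1)^(r+1) * x * D) / (fact m * D)"
    unfolding AA_def e1 using D by (simp add: field_simps)
  also have "\<dots> \<le> Q * (\<Prod>j<r+1. x + real (m+1+j) * r) / (fact m * D)"
    using c Q D by (intro divide_right_mono mult_left_mono) auto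
  also have "\<dots> = AA u0 r (k+1) (m+r)"
    unfolding AA_def fact_add_prod D_def[symmetric] e2[symmetric] by (simp add: add.assoc)
  finally show ?thesis .
qed

lemma AA_iter:
  assumes u0: "u0 \<ge> 1"
  shows "(real r+1)^(k*(r+1)) * AA u0 r 0 n0 \<le> AA u0 r k (n0 + k*r)"
proof (induction k)
  case 0 then show ?case by simp
next
  case (Suc k)
  have "(real r+1)^(Suc k*(r+1)) * AA u0 r 0 n0 = (real r+1)^(r+1) * ((real r+1)^(k*(r+1)) * AA u0 r 0 n0)"
    by (simp add: power_add algebra_simps)
  also have "\<dots> \<le> (real r+1)^(r+1) * AA u0 r k (n0 + k*r)"
    using Suc.IH by (intro mult_left_mono) auto
  also have "\<dots> \<le> AA u0 r (k+1) (n0 + k*r + r)" by (rule AA_step[OF u0])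
  finally show ?case by (simp add: algebra_simps)
qed

lemma AA_Suc: "AA u0 r k (Suc m) = AA u0 r k m * (real (u0 + (k + Suc m)*r) / real (Suc m))"
proof -
  have "AA u0 r k (Suc m) = ((\<Prod>i\<le>m. real (u0 + (k+i)*r)) * real (u0 + (k + Suc m)*r)) / (real (Suc m) * fact m)"
    unfolding AA_def by (simp only: prod.atMost_Suc fact_Suc of_nat_mult)
  also have "\<dots> = AA u0 r k m * (real (u0 + (k + Suc m)*r) / real (Suc m))"
    unfolding AA_def by (simp only: times_divide_times_eq mult.commute)
  finally show ?thesis .
qed

lemma AA_base0: "AA u0 r 0 0 = real u0"
  unfolding AA_def by simp

lemma AA_base: "real u0 * (real r + 1) * real r ^ n \<le> AA u0 r 0 (Suc n)"
proof (induction n)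
  case 0
  have "real u0 * (real r + 1) \<le> real u0 * (real u0 + real r)" 
    by (cases "u0 = 0") (auto intro: mult_left_mono)
  then show ?case unfolding AA_def by (simp add: algebra_simps)
next
  case (Suc n)
  have f: "real r * real (Suc (Suc n)) \<le> real (u0 + Suc (Suc n) * r)" by (simp add: algebra_simps)
  define q where "q = real (u0 + Suc (Suc n) * r) / real (Suc (Suc n))"
  have E: "AA u0 r 0 (Suc (Suc n)) = AA u0 r 0 (Suc n) * q"
    unfolding q_def using AA_Suc[of u0 r 0 "Suc n"] by simp
  have F: "real r \<le> q" unfolding q_def
    using f by (simp add: le_divide_eq del: of_nat_Suc)
  have G: "AA u0 r 0 (Suc n) \<ge> 0" unfolding AA_def by (intro divide_nonneg_pos prod_nonneg) auto
  have "AA u0 r 0 (Suc n) * real r \<le> AA u0 r 0 (Suc (Suc n))"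
    unfolding E by (rule mult_left_mono[OF F G])
  moreover have "real u0 * (real r + 1) * real r ^ Suc n = (real u0 * (real r + 1) * real r ^ n) * real r"
    by simp
  ultimately show ?case using Suc.IH by (smt (verit) mult_right_mono of_nat_0_le_iff)
qed

lemma powlem_aux: "j \<le> r \<Longrightarrow> (r+1)^j * (r - j) \<le> (r::nat)^(j+1)"
proof (induction j)
  case 0 then show ?case by simp
next
  case (Suc j)
  obtain d where d: "r = d + j + 1" using Suc.prems by (metis add.commute add_Suc_right le_Suc_ex plus_1_eq_Suc)
  have "(r+1) * (r - Suc j) \<le> r * (r - j)" unfolding d by (simp add: algebra_simps)
  then have "(r+1)^j * ((r+1) * (r - Suc j)) \<le> (r+1)^j * (r * (r - j))"
    by (rule mult_left_mono) simp
  moreover have "(r+1)^(Suc j) * (r - Suc j) = (r+1)^j * ((r+1) * (r - Suc j))"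
    by (metis power_Suc mult.assoc mult.commute)
  ultimately have "(r+1)^(Suc j) * (r - Suc j) \<le> (r+1)^j * (r * (r - j))" by simp
  also have "\<dots> = r * ((r+1)^j * (r - j))" by (simp add: algebra_simps)
  also have "\<dots> \<le> r * r^(j+1)" using Suc by (intro mult_left_mono) auto
  finally show ?case by simp
qed

lemma powlem: "j < r \<Longrightarrow> (r+1)^j \<le> (r::nat)^(j+1)"
  using powlem_aux[of j r] by (metis le_eq_less_or_eq mult_le_mono2 mult.right_neutral order_trans
      less_imp_le_nat zero_less_diff Suc_le_eq One_nat_def)

lemma expo:
  fixes a \<alpha> r n :: nat
  assumes "a \<ge> 2" "\<alpha> \<ge> a" "r \<ge> a" "n \<ge> 2*\<alpha>*r"
  shows "\<alpha> + a - 1 \<le> n div (r+1) + (n div (r+1)) div r"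
proof -
  define k where "k = n div (r+1)"
  show ?thesis
  proof (cases "\<alpha> \<ge> r + 1")
    case True
    then obtain d where d: "\<alpha> = r + 1 + d" by (metis le_add_diff_inverse)
    have "(\<alpha> + r - 1) * (r+1) \<le> 2*\<alpha>*r" using assms unfolding d by (simp add: algebra_simps)
    then have "(\<alpha> + r - 1) * (r+1) \<le> n" using assms by linarith
    then have "\<alpha> + r - 1 \<le> k" unfolding k_def by (simp add: less_eq_div_iff_mult_less_eq)
    then show ?thesis using assms unfolding k_def by linarith
  next
    case False
    show ?thesis
    proof (cases "2*\<alpha> \<le> r + 1")
      case True
      have "(2*\<alpha> - 1) * (r+1) \<le> 2*\<alpha>*r" using True assms by (simp add: algebra_simps diff_mult_distrib)
      then have "(2*\<alpha> - 1) * (r+1) \<le> n" using assms by linarith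
      then have "2*\<alpha> - 1 \<le> k" unfolding k_def by (simp add: less_eq_div_iff_mult_less_eq)
      then show ?thesis using assms unfolding k_def by linarith
    next
      case F2: False
      have "(2*\<alpha> - 2) * (r+1) \<le> 2*\<alpha>*r" using False assms by (simp add: algebra_simps diff_mult_distrib)
      then have "(2*\<alpha> - 2) * (r+1) \<le> n" using assms by linarith
      then have k1: "2*\<alpha> - 2 \<le> k" unfolding k_def by (simp add: less_eq_div_iff_mult_less_eq)
      then have "r \<le> k" using F2 by linarith
      then have "1 \<le> k div r" using assms by (simp add: less_eq_div_iff_mult_less_eq)
      then show ?thesis using k1 False assms unfolding k_def by linarith
    qed
  qed
qed

theorem theorem1p2:
  fixes u0 r a \<alpha> n :: nat
  assumes "u0 \<ge> 1" and "r \<ge> 1" and "coprime u0 r"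
    and "a \<ge> 2" and "\<alpha> \<ge> a" and "r \<ge> a" and "n \<ge> 2 * \<alpha> * r"
  shows "ap_lcm u0 r n \<ge> u0 * r ^ (\<alpha> + a - 2) * (r + 1) ^ n"
proof -
  define k where "k = n div (r+1)"
  define n0 where "n0 = n mod (r+1)"
  define m where "m = n0 + k*r"
  define T where "T = \<alpha> + a - 2"
  define e where "e = e2 r m"
  define L where "L = ap_lcm u0 r n"
  define R where "R = real r + 1"
  have nk: "n = k*(r+1) + n0" unfolding k_def n0_def using div_mult_mod_eq[of n "r+1"] by simp
  have km: "k + m \<le> n" unfolding m_def using nk by (simp add: algebra_simps)
  have n0r: "n0 < r + 1" unfolding n0_def by simp
  have "k \<le> m div r" unfolding m_def using assms(2) by (simp add: less_eq_div_iff_mult_less_eq)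
  then have "k + k div r \<le> e" unfolding e_def e2_def by (simp add: add_mono div_le_mono)
  moreover have "\<alpha> + a - 1 \<le> k + k div r" unfolding k_def using expo assms by blast
  ultimately have Te: "T + 1 \<le> e" unfolding T_def using assms by linarith
  have lb: "(\<Prod>i\<le>m. u0 + (k+i)*r) * r^e \<le> L * fact m"
    unfolding e_def L_def using lcm_bound[OF assms(1,2,3) km] .
  have "AA u0 r k m * real r^e = real ((\<Prod>i\<le>m. u0 + (k+i)*r) * r^e) / fact m"
    unfolding AA_def by simp
  also have "\<dots> \<le> real (L * fact m) / fact m"
    using lb by (intro divide_right_mono) (simp only: of_nat_le_iff, simp)
  also have "\<dots> = real L" by simp
  finally have L1: "AA u0 r k m * real r^e \<le> real L" .
  have L2: "R^(k*(r+1)) * AA u0 r 0 n0 \<le> AA u0 r k m"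
    unfolding R_def m_def using AA_iter[OF assms(1)] .
  have rpos: "real r^e \<ge> 0" by simp
  have key: "real u0 * real r^T * R^n \<le> R^(k*(r+1)) * AA u0 r 0 n0 * real r^e"
  proof (cases n0)
    case 0
    have "real r^T \<le> real r^e" using Te assms(2) by (intro power_increasing) auto
    then have "real u0 * real r^T * R^n \<le> real u0 * real r^e * R^n"
      unfolding R_def by (intro mult_right_mono mult_left_mono) auto
    then show ?thesis using 0 nk AA_base0 by (simp add: algebra_simps)
  next
    case (Suc j)
    have jr: "j < r" using n0r Suc by simp
    have "(r+1)^j \<le> r^(j+1)" using powlem[OF jr] .
    then have "r^T * (r+1)^j \<le> r^T * r^(j+1)" by simp
    also have "\<dots> = r^(T+1) * r^j" by (simp add: power_add)
    also have "\<dots> \<le> r^e * r^j" using Te assms(2) by (intro mult_right_mono power_increasing) auto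
    finally have "real (r^T * (r+1)^j) \<le> real (r^e * r^j)" by (simp only: of_nat_le_iff)
    then have P1: "real r^T * R^j \<le> real r^e * real r^j" unfolding R_def by (simp add: add.commute)
    have "real u0 * real r^T * R^n = (R^(k*(r+1)) * (real u0 * R)) * (real r^T * R^j)"
      using nk Suc by (simp add: power_add algebra_simps)
    also have "\<dots> \<le> (R^(k*(r+1)) * (real u0 * R)) * (real r^e * real r^j)"
      using P1 unfolding R_def by (intro mult_left_mono) auto
    also have "\<dots> = R^(k*(r+1)) * (real u0 * R * real r^j) * real r^e" by (simp add: algebra_simps)
    also have "\<dots> \<le> R^(k*(r+1)) * AA u0 r 0 n0 * real r^e"
      using AA_base[of u0 r j] Suc unfolding R_def
      by (intro mult_right_mono mult_left_mono) (auto simp: algebra_simps)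
    finally show ?thesis .
  qed
  also have "\<dots> \<le> AA u0 r k m * real r^e" using L2 rpos by (rule mult_right_mono)
  also have "\<dots> \<le> real L" by (rule L1)
  finally have "real (u0 * r ^ T * (r + 1) ^ n) \<le> real L" unfolding R_def by (simp add: add.commute)
  then show ?thesis unfolding T_def L_def by (simp only: of_nat_le_iff)
qed

end
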